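(* Let $n\ge1$, $N\ge3$, $m=n+N$, let $u>0$ solve $\partial_tu=\Delta_xu$ on $\mathbb{R}^n\times(0,\infty)$ with $u=t^{-n/2}e^{-f}$, and let $v,b,\psi,B$ be as in the context. Set $d=2m|\nabla b|^2$. Then on $\mathbb{R}^n\times(\mathbb{R}^N\setminus\{0\})$, \[ \Delta d+2(2-m)\langle\nabla\log b,\nabla d\rangle=\frac{m}{b^2}|B|^2+\frac{4m}{2-m}\langle\nabla\log b,\nabla\psi\rangle+\frac{2\,d\,\psi}{(2-m)b^2}+\frac{4\psi^2}{(2-m)^2b^2}. \]
   Context: $\mathbb{R}^m=\mathbb{R}^n\times\mathbb{R}^N$, points $(x,y)$, $r=|y|$; $\nabla,\Delta,\mathrm{Hess},\langle\cdot,\cdot\rangle$ are Euclidean on $\mathbb{R}^m$. $v(x,y)=r^{2-m}\exp(-f(x,\tfrac{r^2}{2N}))$, $b=v^{1/(2-m)}$, $\psi=b^m\Delta v$, $B=\mathrm{Hess}(b^2)-\frac{\Delta b^2}{m}I_m$ with $|B|^2$ its squared Hilbert–Schmidt norm. *)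

theory Defs
  imports "HOL-Analysis.Analysis"
begin

definition grad :: "('v::euclidean_space \<Rightarrow> real) \<Rightarrow> 'v \<Rightarrow> 'v" where
  "grad g p = (\<Sum>i\<in>Basis. frechet_derivative g (at p) i *\<^sub>R i)"

definition hess :: "('v::euclidean_space \<Rightarrow> real) \<Rightarrow> 'v \<Rightarrow> 'v \<Rightarrow> 'v \<Rightarrow> real" where
  "hess g p i j = frechet_derivative (\<lambda>q. frechet_derivative g (at q) j) (at p) i"

definition lap :: "('v::euclidean_space \<Rightarrow> real) \<Rightarrow> 'v \<Rightarrow> real" where
  "lap g p = (\<Sum>i\<in>Basis. hess g p i i)"

definition tf_hess_sq :: "('v::euclidean_space \<Rightarrow> real) \<Rightarrow> 'v \<Rightarrow> real" where
  "tf_hess_sq g p = (\<Sum>i\<in>Basis. \<Sum>j\<in>Basis.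
      (hess g p i j - (if i = j then lap g p / real DIM('v) else 0))\<^sup>2)"

fun Ck_on :: "nat \<Rightarrow> ('v::euclidean_space \<Rightarrow> real) \<Rightarrow> 'v set \<Rightarrow> bool" where
  "Ck_on 0 g S = continuous_on S g"
| "Ck_on (Suc k) g S = (g differentiable_on S \<and> continuous_on S g \<and>
      (\<forall>e\<in>Basis. Ck_on k (\<lambda>q. frechet_derivative g (at q) e) S))"

definition smooth_on :: "('v::euclidean_space \<Rightarrow> real) \<Rightarrow> 'v set \<Rightarrow> bool" where
  "smooth_on g S = (\<forall>k. Ck_on k g S)"

text \<open>The objects of the paper on R^m = R^n x R^N, points (x,y), m = n + N.\<close>

definition vfun :: "('a::euclidean_space \<Rightarrow> real \<Rightarrow> real) \<Rightarrow> 'a \<times> 'b::euclidean_space \<Rightarrow> real" where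
  "vfun f = (\<lambda>(x, y). norm y powr (2 - real DIM('a \<times> 'b))
                      * exp (- f x ((norm y)\<^sup>2 / (2 * real DIM('b)))))"

definition bfun :: "('a::euclidean_space \<Rightarrow> real \<Rightarrow> real) \<Rightarrow> 'a \<times> 'b::euclidean_space \<Rightarrow> real" where
  "bfun f = (\<lambda>p. (vfun f p :: real) powr (1 / (2 - real DIM('a \<times> 'b))))"

definition psifun :: "('a::euclidean_space \<Rightarrow> real \<Rightarrow> real) \<Rightarrow> 'a \<times> 'b::euclidean_space \<Rightarrow> real" where
  "psifun f = (\<lambda>p. (bfun f p :: real) ^ DIM('a \<times> 'b) * lap (vfun f :: 'a \<times> 'b \<Rightarrow> real) p)"

definition Bsq :: "('a::euclidean_space \<Rightarrow> real \<Rightarrow> real) \<Rightarrow> 'a \<times> 'b::euclidean_space \<Rightarrow> real" where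
  "Bsq f = tf_hess_sq (\<lambda>p. ((bfun f p :: real))\<^sup>2 :: real)"

definition dfun :: "('a::euclidean_space \<Rightarrow> real \<Rightarrow> real) \<Rightarrow> 'a \<times> 'b::euclidean_space \<Rightarrow> real" where
  "dfun f = (\<lambda>p. 2 * real DIM('a \<times> 'b) * (norm (grad (bfun f :: 'a \<times> 'b \<Rightarrow> real) p))\<^sup>2)"

end

theory Submission
  imports Defs
begin

lemma fd_local:
  assumes "open S" "q \<in> S" "\<And>x. x \<in> S \<Longrightarrow> g x = h x"
  shows "frechet_derivative g (at q) = frechet_derivative h (at q)"
proof -
  have "\<And>D. (g has_derivative D) (at q) \<longleftrightarrow> (h has_derivative D) (at q)"
    using has_derivative_transform_within_open[OF _ assms(1,2)] assms(3)
    by (metis (no_types, lifting))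
  then show ?thesis unfolding frechet_derivative_def by simp
qed

lemma diff_local:
  assumes "g differentiable at q" "open S" "q \<in> S" "\<And>x. x \<in> S \<Longrightarrow> g x = h x"
  shows "h differentiable at q"
  using assms has_derivative_transform_within_open[OF _ assms(2,3)] unfolding differentiable_def
  by metis

lemma fd_eq: "(g has_derivative g') (at q) \<Longrightarrow> frechet_derivative g (at q) = g'"
  using frechet_derivative_at by metis

lemma Ck_cong:
  assumes "Ck_on k g S" "open S" "\<And>x. x \<in> S \<Longrightarrow> g x = h x"
  shows "Ck_on k h S"
  using assms
proof (induction k arbitrary: g h)
  case 0
  then show ?case by (simp cong: continuous_on_cong)
next
  case (Suc k)
  have d: "h differentiable_on S"
    using Suc.prems differentiable_on_eq_differentiable_at
    by (metis Ck_on.simps(2) diff_local)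
  have c: "continuous_on S h" using Suc.prems by (auto cong: continuous_on_cong)
  have "Ck_on k (\<lambda>q. frechet_derivative h (at q) e) S" if e: "e \<in> Basis" for e
  proof -
    have "Ck_on k (\<lambda>q. frechet_derivative g (at q) e) S" using Suc.prems e by auto
    moreover have "\<And>x. x \<in> S \<Longrightarrow> frechet_derivative g (at x) e = frechet_derivative h (at x) e"
      using fd_local[OF \<open>open S\<close>] Suc.prems(3) by metis
    ultimately show ?thesis using Suc.IH[of "\<lambda>q. frechet_derivative g (at q) e" "\<lambda>q. frechet_derivative h (at q) e"] \<open>open S\<close> by simp
  qed
  then show ?case using d c by simp
qed

lemma Ck_mono: "Ck_on (Suc k) g S \<Longrightarrow> Ck_on k g S"
proof (induction k arbitrary: g)
  case 0
  then show ?case by simp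
next
  case (Suc k)
  then show ?case by (metis Ck_on.simps(2))
qed

lemma Ck_mono_le: "Ck_on k g S \<Longrightarrow> j \<le> k \<Longrightarrow> Ck_on j g S"
proof (induction k)
  case 0 then show ?case by simp
next
  case (Suc k) then show ?case by (metis Ck_mono le_Suc_eq)
qed

lemma Ck_cont: "Ck_on k g S \<Longrightarrow> continuous_on S g"
  by (cases k) auto

lemma Ck_diff_at: "Ck_on (Suc k) g S \<Longrightarrow> open S \<Longrightarrow> q \<in> S \<Longrightarrow> g differentiable at q"
  using differentiable_on_eq_differentiable_at by auto

lemma Ck_const: "Ck_on k (\<lambda>q. c) S"
  by (induction k arbitrary: c) auto

lemma Ck_inner: "Ck_on k (\<lambda>q. q \<bullet> c) S"
proof (induction k)
  case 0 show ?case by (auto intro: continuous_intros)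
next
  case (Suc k)
  have fd: "frechet_derivative (\<lambda>q. q \<bullet> c) (at x) = (\<lambda>h. h \<bullet> c)" for x
    by (rule fd_eq) (auto intro!: derivative_eq_intros)
  show ?case
    by (auto simp: fd Ck_const intro!: continuous_intros derivative_intros
          simp: differentiable_on_def)
qed

lemma fdw: "g differentiable at q \<Longrightarrow> (g has_derivative frechet_derivative g (at q)) (at q)"
  using frechet_derivative_works by blast

lemma fd_add:
  assumes "g differentiable at q" "h differentiable at q"
  shows "frechet_derivative (\<lambda>x. g x + h x) (at q) e
     = frechet_derivative g (at q) e + frechet_derivative h (at q) e"
  by (subst fd_eq[OF has_derivative_add[OF fdw[OF assms(1)] fdw[OF assms(2)]]]) simp

lemma fd_mult:
  fixes g h :: "'v::real_normed_vector \<Rightarrow> real"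
  assumes "g differentiable at q" "h differentiable at q"
  shows "frechet_derivative (\<lambda>x. g x * h x) (at q) e
     = frechet_derivative g (at q) e * h q + g q * frechet_derivative h (at q) e"
  by (subst fd_eq[OF has_derivative_mult[OF fdw[OF assms(1)] fdw[OF assms(2)]]]) simp

lemma fd_sum:
  assumes "finite I" "\<And>i. i \<in> I \<Longrightarrow> g i differentiable at q"
  shows "frechet_derivative (\<lambda>x. \<Sum>i\<in>I. g i x) (at q) e
     = (\<Sum>i\<in>I. frechet_derivative (g i) (at q) e)"
proof -
  have "((\<lambda>x. \<Sum>i\<in>I. g i x) has_derivative (\<lambda>h. \<Sum>i\<in>I. frechet_derivative (g i) (at q) h)) (at q)"
    by (rule has_derivative_sum) (use assms fdw in auto)
  then show ?thesis by (subst fd_eq) auto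
qed

lemma fd_comp:
  fixes g :: "'v::real_normed_vector \<Rightarrow> real"
  assumes "(\<Phi> has_real_derivative d) (at (g q))" "g differentiable at q"
  shows "frechet_derivative (\<lambda>x. \<Phi> (g x)) (at q) e = d * frechet_derivative g (at q) e"
proof -
  have "((\<lambda>x. \<Phi> (g x)) has_derivative (\<lambda>h. frechet_derivative g (at q) h * d)) (at q)"
    using has_derivative_compose[OF fdw[OF assms(2)] assms(1)[unfolded has_field_derivative_def]]
    by (simp add: mult.commute)
  then show ?thesis by (subst fd_eq) (auto simp: mult.commute)
qed

lemma diff_comp:
  fixes g :: "'v::real_normed_vector \<Rightarrow> real"
  assumes "(\<Phi> has_real_derivative d) (at (g q))" "g differentiable at q"
  shows "(\<lambda>x. \<Phi> (g x)) differentiable at q"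
  using has_derivative_compose[OF fdw[OF assms(2)] assms(1)[unfolded has_field_derivative_def]]
  unfolding differentiable_def by blast

lemma Ck_add:
  assumes "Ck_on k g S" "Ck_on k h S" "open S"
  shows "Ck_on k (\<lambda>x. g x + h x) S"
  using assms
proof (induction k arbitrary: g h)
  case 0 then show ?case by (auto intro: continuous_intros)
next
  case (Suc k)
  have "Ck_on k (\<lambda>q. frechet_derivative (\<lambda>x. g x + h x) (at q) e) S" if e: "e \<in> Basis" for e
  proof (rule Ck_cong[OF _ \<open>open S\<close>])
    show "Ck_on k (\<lambda>q. frechet_derivative g (at q) e + frechet_derivative h (at q) e) S"
      using Suc e by auto
    show "frechet_derivative g (at x) e + frechet_derivative h (at x) e =
         frechet_derivative (\<lambda>x. g x + h x) (at x) e" if "x \<in> S" for x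
      using fd_add Ck_diff_at Suc.prems that by metis
  qed
  then show ?case using Suc.prems by (auto intro: continuous_intros derivative_intros)
qed

lemma Ck_mult:
  fixes g h :: "'v::euclidean_space \<Rightarrow> real"
  assumes "Ck_on k g S" "Ck_on k h S" "open S"
  shows "Ck_on k (\<lambda>x. g x * h x) S"
  using assms
proof (induction k arbitrary: g h)
  case 0 then show ?case by (auto intro: continuous_intros)
next
  case (Suc k)
  have "Ck_on k (\<lambda>q. frechet_derivative (\<lambda>x. g x * h x) (at q) e) S" if e: "e \<in> Basis" for e
  proof (rule Ck_cong[OF _ \<open>open S\<close>])
    show "Ck_on k (\<lambda>q. frechet_derivative g (at q) e * h q + g q * frechet_derivative h (at q) e) S"
    proof (rule Ck_add[OF _ _ \<open>open S\<close>])
      have h: "Ck_on k h S" "Ck_on k g S" using Suc.prems Ck_mono by blast+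
      show "Ck_on k (\<lambda>x. frechet_derivative g (at x) e * h x) S"
        by (rule Suc.IH) (use Suc.prems e h in auto)
      show "Ck_on k (\<lambda>x. g x * frechet_derivative h (at x) e) S"
        by (rule Suc.IH) (use Suc.prems e h in auto)
    qed
    show "frechet_derivative g (at x) e * h x + g x * frechet_derivative h (at x) e =
         frechet_derivative (\<lambda>x. g x * h x) (at x) e" if "x \<in> S" for x
      using fd_mult Ck_diff_at Suc.prems that by metis
  qed
  then show ?case using Suc.prems by (auto intro: continuous_intros derivative_intros)
qed

lemma Ck_sum:
  fixes g :: "'i \<Rightarrow> 'v::euclidean_space \<Rightarrow> real"
  assumes "finite I" "\<And>i. i \<in> I \<Longrightarrow> Ck_on k (g i) S" "open S"
  shows "Ck_on k (\<lambda>x. \<Sum>i\<in>I. g i x) S"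
  using assms
proof (induction I rule: finite_induct)
  case empty then show ?case by (simp add: Ck_const)
next
  case (insert a I) then show ?case by (simp add: Ck_add)
qed

lemma fd_comp_vec:
  fixes U :: "'c::euclidean_space \<Rightarrow> real" and \<phi> :: "'v::euclidean_space \<Rightarrow> 'c"
  assumes "\<phi> differentiable at q" "U differentiable at (\<phi> q)"
  shows "frechet_derivative (\<lambda>x. U (\<phi> x)) (at q) e
      = (\<Sum>i\<in>Basis. frechet_derivative (\<lambda>x. \<phi> x \<bullet> i) (at q) e * frechet_derivative U (at (\<phi> q)) i)"
proof -
  have c: "frechet_derivative (\<lambda>x. U (\<phi> x)) (at q) e = frechet_derivative U (at (\<phi> q)) (frechet_derivative \<phi> (at q) e)"
    using frechet_derivative_compose[OF assms] by (simp add: o_def)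
  have comp: "frechet_derivative (\<lambda>x. \<phi> x \<bullet> i) (at q) e = frechet_derivative \<phi> (at q) e \<bullet> i" for i
  proof -
    have "((\<lambda>x. \<phi> x \<bullet> i) has_derivative (\<lambda>h. frechet_derivative \<phi> (at q) h \<bullet> i)) (at q)"
      using fdw[OF assms(1)] by (auto intro!: derivative_eq_intros)
    then show ?thesis by (subst fd_eq) auto
  qed
  have lin: "linear (frechet_derivative U (at (\<phi> q)))"
    using linear_frechet_derivative assms(2) by blast
  have "frechet_derivative U (at (\<phi> q)) (frechet_derivative \<phi> (at q) e)
     = frechet_derivative U (at (\<phi> q)) (\<Sum>i\<in>Basis. (frechet_derivative \<phi> (at q) e \<bullet> i) *\<^sub>R i)"
    by (simp add: euclidean_representation)
  also have "\<dots> = (\<Sum>i\<in>Basis. (frechet_derivative \<phi> (at q) e \<bullet> i) * frechet_derivative U (at (\<phi> q)) i)"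
    using lin by (simp add: linear_sum linear_cmul)
  finally show ?thesis using c comp by simp
qed

lemma diff_vec:
  fixes \<phi> :: "'v::euclidean_space \<Rightarrow> 'c::euclidean_space"
  assumes "\<And>i. i \<in> Basis \<Longrightarrow> (\<lambda>x. \<phi> x \<bullet> i) differentiable at q"
  shows "\<phi> differentiable at q"
proof -
  have "(\<lambda>x. \<Sum>i\<in>Basis. (\<phi> x \<bullet> i) *\<^sub>R i) differentiable at q"
    using assms by (auto intro!: derivative_intros)
  then show ?thesis by (simp add: euclidean_representation)
qed

lemma cont_vec:
  fixes \<phi> :: "'v::euclidean_space \<Rightarrow> 'c::euclidean_space"
  assumes "\<And>i. i \<in> Basis \<Longrightarrow> continuous_on S (\<lambda>x. \<phi> x \<bullet> i)"
  shows "continuous_on S \<phi>"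
proof -
  have "continuous_on S (\<lambda>x. \<Sum>i\<in>Basis. (\<phi> x \<bullet> i) *\<^sub>R i)"
    using assms by (intro continuous_on_sum continuous_on_scaleR continuous_on_const) auto
  then show ?thesis by (simp add: euclidean_representation)
qed

lemma Ck_chain:
  fixes U :: "'c::euclidean_space \<Rightarrow> real" and \<phi> :: "'v::euclidean_space \<Rightarrow> 'c"
  assumes "Ck_on k U T" "open T" "open S" "\<phi> ` S \<subseteq> T" "\<forall>i\<in>Basis. Ck_on k (\<lambda>q. \<phi> q \<bullet> i) S"
  shows "Ck_on k (\<lambda>q. U (\<phi> q)) S"
  using assms
proof (induction k arbitrary: U)
  case 0
  have "continuous_on S \<phi>" 
    by (rule cont_vec) (use 0(5) in simp)
  moreover have "continuous_on T U" using 0(1) by simp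
  ultimately have "continuous_on S (\<lambda>q. U (\<phi> q))" using continuous_on_compose2 0(4) by blast
  then show ?case by simp
next
  case (Suc k)
  have dphi: "\<phi> differentiable at q" if "q \<in> S" for q
  proof (rule diff_vec)
    fix i :: 'c assume "i \<in> Basis"
    then have "Ck_on (Suc k) (\<lambda>q. \<phi> q \<bullet> i) S" using Suc.prems(5) by blast
    then show "(\<lambda>x. \<phi> x \<bullet> i) differentiable at q" using Ck_diff_at[OF _ \<open>open S\<close> that] by blast
  qed
  have dU: "U differentiable at (\<phi> q)" if "q \<in> S" for q
  proof -
    have "\<phi> q \<in> T" using Suc.prems(4) that by blast
    then show ?thesis using Ck_diff_at[OF Suc.prems(1,2)] by blast
  qed
  have dcomp: "(\<lambda>x. U (\<phi> x)) differentiable at q" if "q \<in> S" for q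
    using differentiable_chain_at[OF dphi[OF that] dU[OF that]] by (simp add: o_def)
  have cm: "\<forall>i\<in>Basis. Ck_on k (\<lambda>q. \<phi> q \<bullet> i) S" using Suc.prems(5) Ck_mono by blast
  have "Ck_on k (\<lambda>q. frechet_derivative (\<lambda>x. U (\<phi> x)) (at q) e) S" if e: "e \<in> Basis" for e
  proof (rule Ck_cong[OF _ \<open>open S\<close>])
    show "Ck_on k (\<lambda>q. \<Sum>i\<in>Basis. frechet_derivative (\<lambda>x. \<phi> x \<bullet> i) (at q) e * frechet_derivative U (at (\<phi> q)) i) S"
    proof (rule Ck_sum[OF _ _ \<open>open S\<close>])
      show "finite (Basis :: 'c set)" by simp
      fix i :: 'c assume i: "i \<in> Basis"
      have a: "Ck_on k (\<lambda>q. frechet_derivative (\<lambda>x. \<phi> x \<bullet> i) (at q) e) S"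
      proof -
        have "Ck_on (Suc k) (\<lambda>q. \<phi> q \<bullet> i) S" using Suc.prems(5) i by blast
        then show ?thesis using e by (simp only: Ck_on.simps)
      qed
      have "Ck_on k (\<lambda>p. frechet_derivative U (at p) i) T" 
        using Suc.prems(1) i by (simp only: Ck_on.simps)
      then have b: "Ck_on k (\<lambda>q. frechet_derivative U (at (\<phi> q)) i) S"
        using Suc.IH[of "\<lambda>p. frechet_derivative U (at p) i"] Suc.prems(2,3,4) cm by blast
      show "Ck_on k (\<lambda>q. frechet_derivative (\<lambda>x. \<phi> x \<bullet> i) (at q) e * frechet_derivative U (at (\<phi> q)) i) S"
        by (rule Ck_mult[OF a b \<open>open S\<close>])
    qed
    show "(\<Sum>i\<in>Basis. frechet_derivative (\<lambda>x. \<phi> x \<bullet> i) (at x) e * frechet_derivative U (at (\<phi> x)) i) =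
         frechet_derivative (\<lambda>x. U (\<phi> x)) (at x) e" if "x \<in> S" for x
      using fd_comp_vec[OF dphi[OF that] dU[OF that]] by simp
  qed
  moreover have "(\<lambda>x. U (\<phi> x)) differentiable_on S"
    using dcomp differentiable_on_eq_differentiable_at \<open>open S\<close> by blast
  ultimately show ?case using differentiable_imp_continuous_on by simp
qed

lemma Ck_family:
  fixes \<Phi> :: "nat \<Rightarrow> real \<Rightarrow> real"
  assumes "open T" "\<And>j x. x \<in> T \<Longrightarrow> (\<Phi> j has_real_derivative \<Phi> (Suc j) x) (at x)"
  shows "Ck_on k (\<Phi> j) T"
  using assms(2)
proof (induction k arbitrary: j)
  case 0
  have "\<forall>x\<in>T. isCont (\<Phi> j) x" using 0 DERIV_isCont by blast
  then show ?case by (simp add: continuous_at_imp_continuous_on)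
next
  case (Suc k)
  have d: "\<Phi> j differentiable at x" if "x \<in> T" for x
    using Suc.prems[OF that] real_differentiable_def by (metis differentiableI)
  have fd: "frechet_derivative (\<Phi> j) (at x) 1 = \<Phi> (Suc j) x" if "x \<in> T" for x
    using fd_eq[OF Suc.prems[OF that, unfolded has_field_derivative_def]] by simp
  have "Ck_on k (\<lambda>x. frechet_derivative (\<Phi> j) (at x) 1) T"
    by (rule Ck_cong[OF Suc.IH \<open>open T\<close>]) (use Suc.prems fd in auto)
  moreover have "\<Phi> j differentiable_on T"
    using d differentiable_on_eq_differentiable_at \<open>open T\<close> by blast
  ultimately show ?case using differentiable_imp_continuous_on by auto
qed

lemma Ck_comp1:
  fixes g :: "'v::euclidean_space \<Rightarrow> real"
  assumes "open T" "\<And>j x. x \<in> T \<Longrightarrow> (\<Phi> j has_real_derivative \<Phi> (Suc j) x) (at x)"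
    "Ck_on k g S" "open S" "g ` S \<subseteq> T"
  shows "Ck_on k (\<lambda>x. \<Phi> 0 (g x)) S"
proof (rule Ck_chain[where T=T and U="\<Phi> 0" and \<phi>=g])
  show "Ck_on k (\<Phi> 0) T" by (rule Ck_family[where \<Phi>=\<Phi>]) (use assms(1,2) in auto)
qed (use assms(1,3,4,5) in auto)

lemma line_deriv:
  fixes g :: "'v::real_normed_vector \<Rightarrow> real"
  assumes "g differentiable at (a + s *\<^sub>R e)"
  shows "((\<lambda>t. g (a + t *\<^sub>R e)) has_real_derivative frechet_derivative g (at (a + s *\<^sub>R e)) e) (at s)"
proof -
  let ?D = "frechet_derivative g (at (a + s *\<^sub>R e))"
  have l: "linear ?D" using linear_frechet_derivative assms by blast
  have "((\<lambda>t. a + t *\<^sub>R e) has_derivative (\<lambda>t. t *\<^sub>R e)) (at s)"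
    by (auto intro!: derivative_eq_intros)
  from has_derivative_compose[OF this fdw[OF assms]]
  have "((\<lambda>t. g (a + t *\<^sub>R e)) has_derivative (\<lambda>t. ?D (t *\<^sub>R e))) (at s)" .
  moreover have "(\<lambda>t. ?D (t *\<^sub>R e)) = (*) (?D e)"
    using l by (auto simp: linear_cmul)
  ultimately show ?thesis unfolding has_field_derivative_def by simp
qed

lemma mixed_mvt:
  fixes g :: "'v::real_normed_vector \<Rightarrow> real"
  assumes h: "h > 0"
    and inS: "\<And>s t. 0 \<le> s \<Longrightarrow> s \<le> h \<Longrightarrow> 0 \<le> t \<Longrightarrow> t \<le> h \<Longrightarrow> p + s *\<^sub>R i + t *\<^sub>R j \<in> S"
    and dg: "\<And>q. q \<in> S \<Longrightarrow> g differentiable at q"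
    and di: "\<And>q. q \<in> S \<Longrightarrow> (\<lambda>q. frechet_derivative g (at q) i) differentiable at q"
  shows "\<exists>s t. 0 < s \<and> s < h \<and> 0 < t \<and> t < h \<and>
     g (p + h *\<^sub>R i + h *\<^sub>R j) - g (p + h *\<^sub>R i) - g (p + h *\<^sub>R j) + g p
       = h * h * frechet_derivative (\<lambda>q. frechet_derivative g (at q) i) (at (p + s *\<^sub>R i + t *\<^sub>R j)) j"
proof -
  define Di where "Di = (\<lambda>q. frechet_derivative g (at q) i)"
  define \<phi> where "\<phi> = (\<lambda>s. g ((p + h *\<^sub>R j) + s *\<^sub>R i) - g (p + s *\<^sub>R i))"
  have "DERIV \<phi> s :> Di ((p + h *\<^sub>R j) + s *\<^sub>R i) - Di (p + s *\<^sub>R i)" if "0 \<le> s" "s \<le> h" for s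
  proof -
    have m1: "(p + h *\<^sub>R j) + s *\<^sub>R i \<in> S" using inS[of s h] that h by (simp add: add_ac)
    have m2: "p + s *\<^sub>R i \<in> S" using inS[of s 0] that h by simp
    show ?thesis unfolding \<phi>_def Di_def
      by (intro DERIV_diff line_deriv dg m1 m2)
  qed
  from MVT2[OF h this] obtain s1 where s1: "0 < s1" "s1 < h"
    "\<phi> h - \<phi> 0 = (h - 0) * (Di ((p + h *\<^sub>R j) + s1 *\<^sub>R i) - Di (p + s1 *\<^sub>R i))" by blast
  define \<psi> where "\<psi> = (\<lambda>t. Di ((p + s1 *\<^sub>R i) + t *\<^sub>R j))"
  have "DERIV \<psi> t :> frechet_derivative Di (at ((p + s1 *\<^sub>R i) + t *\<^sub>R j)) j" if "0 \<le> t" "t \<le> h" for t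
  proof -
    have m: "(p + s1 *\<^sub>R i) + t *\<^sub>R j \<in> S" using inS[of s1 t] that s1 by simp
    show ?thesis unfolding \<psi>_def
      by (rule line_deriv) (use di[OF m] in \<open>simp add: Di_def\<close>)
  qed
  from MVT2[OF h this] obtain t1 where t1: "0 < t1" "t1 < h"
    "\<psi> h - \<psi> 0 = (h - 0) * frechet_derivative Di (at ((p + s1 *\<^sub>R i) + t1 *\<^sub>R j)) j" by blast
  have eqphi: "\<phi> h - \<phi> 0 = g (p + h *\<^sub>R i + h *\<^sub>R j) - g (p + h *\<^sub>R i) - g (p + h *\<^sub>R j) + g p"
    unfolding \<phi>_def by (simp add: add_ac)
  have eqpsi: "\<psi> h - \<psi> 0 = Di ((p + h *\<^sub>R j) + s1 *\<^sub>R i) - Di (p + s1 *\<^sub>R i)"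
    unfolding \<psi>_def by (simp add: add_ac)
  have "g (p + h *\<^sub>R i + h *\<^sub>R j) - g (p + h *\<^sub>R i) - g (p + h *\<^sub>R j) + g p
       = h * h * frechet_derivative Di (at (p + s1 *\<^sub>R i + t1 *\<^sub>R j)) j"
  proof -
    have "g (p + h *\<^sub>R i + h *\<^sub>R j) - g (p + h *\<^sub>R i) - g (p + h *\<^sub>R j) + g p = \<phi> h - \<phi> 0"
      using eqphi by simp
    also have "\<dots> = h * (\<psi> h - \<psi> 0)" using s1(3) eqpsi by simp
    also have "\<dots> = h * (h * frechet_derivative Di (at (p + s1 *\<^sub>R i + t1 *\<^sub>R j)) j)"
      using t1(3) by simp
    finally show ?thesis by (simp add: mult.assoc)
  qed
  then show ?thesis using s1(1,2) t1(1,2) unfolding Di_def by blast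
qed

lemma schwarz:
  fixes g :: "'v::real_normed_vector \<Rightarrow> real"
  assumes S: "open S" "p \<in> S"
    and dg: "\<And>q. q \<in> S \<Longrightarrow> g differentiable at q"
    and di: "\<And>q. q \<in> S \<Longrightarrow> (\<lambda>q. frechet_derivative g (at q) i) differentiable at q"
    and dj: "\<And>q. q \<in> S \<Longrightarrow> (\<lambda>q. frechet_derivative g (at q) j) differentiable at q"
    and ci: "continuous_on S (\<lambda>q. frechet_derivative (\<lambda>q. frechet_derivative g (at q) i) (at q) j)"
    and cj: "continuous_on S (\<lambda>q. frechet_derivative (\<lambda>q. frechet_derivative g (at q) j) (at q) i)"
  shows "frechet_derivative (\<lambda>q. frechet_derivative g (at q) i) (at p) j
       = frechet_derivative (\<lambda>q. frechet_derivative g (at q) j) (at p) i"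
proof (rule ccontr)
  define A where "A = (\<lambda>q. frechet_derivative (\<lambda>q. frechet_derivative g (at q) i) (at q) j)"
  define B where "B = (\<lambda>q. frechet_derivative (\<lambda>q. frechet_derivative g (at q) j) (at q) i)"
  assume "\<not> ?thesis"
  then have ne: "A p \<noteq> B p" unfolding A_def B_def by simp
  define e where "e = \<bar>A p - B p\<bar> / 2"
  have e: "e > 0" using ne unfolding e_def by simp
  have "isCont A p" using ci S continuous_on_eq_continuous_at unfolding A_def by blast
  then obtain d1 where d1: "d1 > 0" "\<And>q. dist q p < d1 \<Longrightarrow> dist (A q) (A p) < e"
    using e unfolding continuous_at_eps_delta by blast
  have "isCont B p" using cj S continuous_on_eq_continuous_at unfolding B_def by blast
  then obtain d2 where d2: "d2 > 0" "\<And>q. dist q p < d2 \<Longrightarrow> dist (B q) (B p) < e"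
    using e unfolding continuous_at_eps_delta by blast
  obtain r where r: "r > 0" "ball p r \<subseteq> S" using S open_contains_ball by blast
  define c where "c = norm i + norm j + 1"
  have c: "c > 0" unfolding c_def by (simp add: add_nonneg_pos)
  define h where "h = min r (min d1 d2) / (2 * c)"
  have h: "h > 0" unfolding h_def using r d1 d2 c by simp
  have small: "norm (s *\<^sub>R i + t *\<^sub>R j) < min r (min d1 d2)" if "0 \<le> s" "s \<le> h" "0 \<le> t" "t \<le> h" for s t
  proof -
    have "norm (s *\<^sub>R i + t *\<^sub>R j) \<le> s * norm i + t * norm j"
      using norm_triangle_ineq[of "s *\<^sub>R i" "t *\<^sub>R j"] that by simp
    also have "\<dots> \<le> h * norm i + h * norm j"
      using that by (intro add_mono mult_right_mono) auto
    also have "\<dots> < h * (2 * c)"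
    proof -
      have "h * norm i \<ge> 0" "h * norm j \<ge> 0" using h by simp_all
      moreover have "h * (2 * c) = 2 * (h * norm i) + 2 * (h * norm j) + 2 * h"
        unfolding c_def by (simp add: algebra_simps)
      ultimately show ?thesis using h by linarith
    qed
    also have "\<dots> = min r (min d1 d2)" unfolding h_def using c by simp
    finally show ?thesis .
  qed
  have inS: "p + s *\<^sub>R i + t *\<^sub>R j \<in> S" if "0 \<le> s" "s \<le> h" "0 \<le> t" "t \<le> h" for s t
  proof -
    have "dist (p + s *\<^sub>R i + t *\<^sub>R j) p < r" using small[OF that] by (simp add: dist_norm add.assoc)
    then have "dist p (p + s *\<^sub>R i + t *\<^sub>R j) < r" by (simp add: dist_commute)
    then show ?thesis using r by auto
  qed
  have inS': "p + s *\<^sub>R j + t *\<^sub>R i \<in> S" if "0 \<le> s" "s \<le> h" "0 \<le> t" "t \<le> h" for s t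
    using inS[OF that(3,4,1,2)] by (simp add: add_ac)
  obtain s1 t1 where st1: "0 < s1" "s1 < h" "0 < t1" "t1 < h"
    "g (p + h *\<^sub>R i + h *\<^sub>R j) - g (p + h *\<^sub>R i) - g (p + h *\<^sub>R j) + g p
       = h * h * A (p + s1 *\<^sub>R i + t1 *\<^sub>R j)"
    using mixed_mvt[OF h inS dg di] unfolding A_def by blast
  obtain s2 t2 where st2: "0 < s2" "s2 < h" "0 < t2" "t2 < h"
    "g (p + h *\<^sub>R j + h *\<^sub>R i) - g (p + h *\<^sub>R j) - g (p + h *\<^sub>R i) + g p
       = h * h * B (p + s2 *\<^sub>R j + t2 *\<^sub>R i)"
    using mixed_mvt[OF h inS' dg dj] unfolding B_def by blast
  have "g (p + h *\<^sub>R j + h *\<^sub>R i) = g (p + h *\<^sub>R i + h *\<^sub>R j)" by (simp add: add_ac)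
  then have "h * h * A (p + s1 *\<^sub>R i + t1 *\<^sub>R j) = h * h * B (p + s2 *\<^sub>R j + t2 *\<^sub>R i)"
    using st1(5) st2(5) by linarith
  then have eqAB: "A (p + s1 *\<^sub>R i + t1 *\<^sub>R j) = B (p + s2 *\<^sub>R j + t2 *\<^sub>R i)"
    using h by simp
  have "dist (p + s1 *\<^sub>R i + t1 *\<^sub>R j) p < d1"
    using small[of s1 t1] st1 by (simp add: dist_norm)
  then have 1: "\<bar>A (p + s1 *\<^sub>R i + t1 *\<^sub>R j) - A p\<bar> < e" using d1 by (simp add: dist_real_def)
  have "dist (p + s2 *\<^sub>R j + t2 *\<^sub>R i) p < d2"
    using small[of t2 s2] st2 by (simp add: dist_norm add_ac)
  then have 2: "\<bar>B (p + s2 *\<^sub>R j + t2 *\<^sub>R i) - B p\<bar> < e" using d2 by (simp add: dist_real_def)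
  from 1 2 eqAB have "\<bar>A p - B p\<bar> < 2 * e" by linarith
  then show False unfolding e_def by simp
qed

lemma powr_family:
  fixes x a :: real
  assumes "x > 0"
  shows "((\<lambda>x. (\<Prod>i<j. (a - real i)) * x powr (a - real j)) has_real_derivative
           (\<Prod>i<Suc j. (a - real i)) * x powr (a - real (Suc j))) (at x)"
proof -
  have "((\<lambda>x. (\<Prod>i<j. (a - real i)) * x powr (a - real j)) has_real_derivative
           (\<Prod>i<j. (a - real i)) * ((a - real j) * x powr (a - real j - 1))) (at x)"
    by (intro DERIV_cmult has_real_derivative_powr assms)
  moreover have "a - real j - 1 = a - real (Suc j)" by simp
  ultimately show ?thesis by (simp add: prod.lessThan_Suc mult_ac)
qed

lemma Ck_powr:
  fixes g :: "'v::euclidean_space \<Rightarrow> real"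
  assumes "Ck_on k g S" "open S" "\<And>x. x \<in> S \<Longrightarrow> g x > 0"
  shows "Ck_on k (\<lambda>x. g x powr a) S"
proof -
  define \<Phi> where "\<Phi> = (\<lambda>j (x::real). (\<Prod>i<j. (a - real i)) * x powr (a - real j))"
  have "Ck_on k (\<lambda>x. \<Phi> 0 (g x)) S"
  proof (rule Ck_comp1[where T="{0<..}" and \<Phi>=\<Phi>])
    show "open {0::real<..}" by simp
    show "(\<Phi> j has_real_derivative \<Phi> (Suc j) x) (at x)" if "x \<in> {0<..}" for j x
      unfolding \<Phi>_def using powr_family that by simp
    show "g ` S \<subseteq> {0<..}" using assms(3) by auto
  qed (use assms in auto)
  then show ?thesis unfolding \<Phi>_def by simp
qed

definition Sset :: "('a::euclidean_space \<times> 'b::euclidean_space) set" where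
  "Sset = {q. snd q \<noteq> 0}"

lemma open_Sset: "open Sset"
  unfolding Sset_def by (rule open_Collect_neq) (auto intro: continuous_intros)

lemma Ck_N2: "Ck_on k (\<lambda>q::'a::euclidean_space \<times> 'b::euclidean_space. snd q \<bullet> snd q) S"
  if "open S"
proof (rule Ck_cong[OF _ that])
  show "Ck_on k (\<lambda>q. \<Sum>i\<in>(Basis::'b set). (q \<bullet> (0, i)) * (q \<bullet> (0, i))) S"
    by (intro Ck_sum Ck_mult Ck_inner that) auto
  show "(\<Sum>i\<in>(Basis::'b set). (x \<bullet> (0, i)) * (x \<bullet> (0, i))) = snd x \<bullet> snd x" for x :: "'a \<times> 'b"
    by (simp add: inner_Pair_0 euclidean_inner[of "snd x" "snd x"])
qed

lemma v_smooth:
  fixes u f :: "'a::euclidean_space \<Rightarrow> real \<Rightarrow> real"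
  assumes u_smooth: "smooth_on (\<lambda>(z, t). u z t) (UNIV \<times> {0<..})"
    and u_f: "\<And>z t. t > 0 \<Longrightarrow> u z t = t powr (- real DIM('a) / 2) * exp (- f z t)"
  shows "Ck_on k (vfun f :: 'a \<times> 'b::euclidean_space \<Rightarrow> real) Sset"
proof -
  let ?m = "real DIM('a \<times> 'b)"
  let ?N = "real DIM('b)"
  define s where "s = (\<lambda>q::'a\<times>'b. (snd q \<bullet> snd q) * (1 / (2 * ?N)))"
  have spos: "s q > 0" if "q \<in> Sset" for q
    using that unfolding s_def Sset_def by simp
  have Cs: "Ck_on k s Sset" unfolding s_def
    by (intro Ck_mult Ck_N2 Ck_const open_Sset)
  have CU: "Ck_on k (\<lambda>q. (\<lambda>(z, t). u z t) (fst q, s q)) Sset"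
  proof (rule Ck_chain[where T="UNIV \<times> {0<..}"])
    show "Ck_on k (\<lambda>(z, t). u z t) (UNIV \<times> {0<..})" using u_smooth unfolding smooth_on_def by blast
    show "open (UNIV \<times> {0::real<..})" by (intro open_Times) auto
    show "open (Sset :: ('a \<times> 'b) set)" by (rule open_Sset)
    show "(\<lambda>q. (fst q, s q)) ` Sset \<subseteq> UNIV \<times> {0<..}" using spos by auto
    show "\<forall>i\<in>Basis. Ck_on k (\<lambda>q. (fst q, s q) \<bullet> i) Sset"
    proof
      fix i :: "'a \<times> real"
      have "Ck_on k (\<lambda>q. q \<bullet> (fst i, 0) + s q * snd i) Sset"
        by (intro Ck_add Ck_mult Ck_inner Ck_const Cs open_Sset)
      then show "Ck_on k (\<lambda>q. (fst q, s q) \<bullet> i) Sset"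
        by (rule Ck_cong[OF _ open_Sset]) (cases i, auto simp: inner_Pair_0)
    qed
  qed
  have C1: "Ck_on k (\<lambda>q. (snd q \<bullet> snd q) powr ((2 - ?m) / 2)) Sset"
    by (intro Ck_powr Ck_N2 open_Sset) (auto simp: Sset_def)
  have C2: "Ck_on k (\<lambda>q. s q powr (real DIM('a) / 2)) Sset"
    by (intro Ck_powr Cs open_Sset spos)
  have "Ck_on k (\<lambda>q. (snd q \<bullet> snd q) powr ((2 - ?m) / 2) * (u (fst q) (s q) * s q powr (real DIM('a) / 2))) Sset"
    using CU by (intro Ck_mult C1 C2 open_Sset) auto
  then show ?thesis
  proof (rule Ck_cong[OF _ open_Sset])
    fix q :: "'a \<times> 'b" assume q: "q \<in> Sset"
    obtain x y where xy: "q = (x, y)" by (cases q)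
    have y: "y \<noteq> 0" using q xy unfolding Sset_def by simp
    have sq: "s q = (norm y)\<^sup>2 / (2 * ?N)" unfolding s_def xy by (simp add: power2_norm_eq_inner)
    have "(snd q \<bullet> snd q) powr ((2 - ?m) / 2) = norm y powr (2 - ?m)"
    proof -
      have "snd q \<bullet> snd q = norm y powr 2" using y xy by (simp add: power2_norm_eq_inner[symmetric])
      moreover have "(norm y powr 2) powr ((2 - ?m) / 2) = norm y powr (2 - ?m)"
      proof -
        have "2 * ((2 - ?m) / 2) = 2 - ?m" by simp
        then show ?thesis by (simp only: powr_powr)
      qed
      ultimately show ?thesis by (simp only:)
    qed
    moreover have "u x (s q) * s q powr (real DIM('a) / 2) = exp (- f x (s q))"
    proof -
      have sp: "s q > 0" using spos q by blast
      have "u x (s q) * s q powr (real DIM('a) / 2)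
          = (s q powr (- real DIM('a) / 2) * s q powr (real DIM('a) / 2)) * exp (- f x (s q))"
        using u_f[OF sp] by (simp add: mult_ac)
      also have "s q powr (- real DIM('a) / 2) * s q powr (real DIM('a) / 2) = 1"
        using sp by (simp add: powr_add[symmetric])
      finally show ?thesis by simp
    qed
    ultimately show "(snd q \<bullet> snd q) powr ((2 - ?m) / 2) * (u (fst q) (s q) * s q powr (real DIM('a) / 2)) = vfun f q"
      unfolding vfun_def xy using sq xy by simp
  qed
qed

lemma tf_expand:
  fixes X :: "'i \<Rightarrow> 'i \<Rightarrow> real"
  assumes "finite I"
  shows "(\<Sum>i\<in>I. \<Sum>j\<in>I. (X i j - (if i = j then c else 0))\<^sup>2)
       = (\<Sum>i\<in>I. \<Sum>j\<in>I. (X i j)\<^sup>2) - 2 * c * (\<Sum>i\<in>I. X i i) + real (card I) * c\<^sup>2"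
proof -
  have "(X i j - (if i = j then c else 0))\<^sup>2 = (X i j)\<^sup>2 - (if i = j then 2 * c * X i i - c\<^sup>2 else 0)" for i j
    by (auto simp: power2_eq_square algebra_simps)
  then have "(\<Sum>i\<in>I. \<Sum>j\<in>I. (X i j - (if i = j then c else 0))\<^sup>2)
     = (\<Sum>i\<in>I. (\<Sum>j\<in>I. (X i j)\<^sup>2) - (2 * c * X i i - c\<^sup>2))"
    using assms by (simp add: sum_subtractf)
  also have "\<dots> = (\<Sum>i\<in>I. \<Sum>j\<in>I. (X i j)\<^sup>2) - 2 * c * (\<Sum>i\<in>I. X i i) + real (card I) * c\<^sup>2"
    by (simp add: sum_subtractf sum.distrib sum_distrib_left)
  finally show ?thesis .
qed

lemma algebra_core:
  fixes a Y :: "'i \<Rightarrow> real" and H X YY :: "'i \<Rightarrow> 'i \<Rightarrow> real"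
  assumes fin: "finite I" and card: "real (card I) = m" and m0: "m \<noteq> 0" and k: "k = 2 - m" "k \<noteq> 0"
    and bb: "bb > 0"
    and XY: "\<And>i j. i \<in> I \<Longrightarrow> j \<in> I \<Longrightarrow> X j i = YY i j"
    and Lw: "Lw = (\<Sum>l\<in>I. 2 * (a l * a l + bb * H l l))"
    and dd: "dd = 2 * m * (\<Sum>i\<in>I. (a i)\<^sup>2)"
    and ps: "ps = k * (bb * (\<Sum>j\<in>I. H j j) + (k - 1) * (\<Sum>j\<in>I. (a j)\<^sup>2))"
    and Dps: "\<And>i. Dps i = k * (a i * (\<Sum>j\<in>I. H j j) + bb * (\<Sum>j\<in>I. YY i j) + (k - 1) * (\<Sum>j\<in>I. 2 * a j * H i j))"
  shows "(\<Sum>j\<in>I. 2 * m * (\<Sum>i\<in>I. 2 * (H j i * H j i + a i * X j i)))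
          + 2 * k * (\<Sum>j\<in>I. (a j / bb) * (2 * m * (\<Sum>i\<in>I. 2 * a i * H j i)))
       = m / bb\<^sup>2 * (\<Sum>i\<in>I. \<Sum>j\<in>I. (2 * (a i * a j + bb * H i j) - (if i = j then Lw / m else 0))\<^sup>2)
         + 4 * m / k * (\<Sum>i\<in>I. (a i / bb) * Dps i)
         + 2 * dd * ps / (k * bb\<^sup>2)
         + 4 * ps\<^sup>2 / (k\<^sup>2 * bb\<^sup>2)"
proof -
  define g where "g = (\<Sum>i\<in>I. (a i)\<^sup>2)"
  define L where "L = (\<Sum>j\<in>I. H j j)"
  define Q where "Q = (\<Sum>i\<in>I. \<Sum>j\<in>I. H i j * H i j)"
  define P where "P = (\<Sum>i\<in>I. \<Sum>j\<in>I. a i * a j * H i j)"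
  define R where "R = (\<Sum>i\<in>I. a i * (\<Sum>j\<in>I. YY i j))"
  have e1: "(\<Sum>j\<in>I. 2 * m * (\<Sum>i\<in>I. 2 * (H j i * H j i + a i * X j i))) = 4 * m * (Q + R)"
  proof -
    have "(\<Sum>j\<in>I. \<Sum>i\<in>I. a i * X j i) = (\<Sum>j\<in>I. \<Sum>i\<in>I. a i * YY i j)"
      by (intro sum.cong refl) (simp add: XY)
    also have "\<dots> = R"
      unfolding R_def sum_distrib_left by (rule sum.swap)
    finally have "(\<Sum>j\<in>I. \<Sum>i\<in>I. a i * X j i) = R" .
    moreover have "(\<Sum>j\<in>I. 2 * m * (\<Sum>i\<in>I. 2 * (H j i * H j i + a i * X j i)))
        = 4 * m * ((\<Sum>j\<in>I. \<Sum>i\<in>I. H j i * H j i) + (\<Sum>j\<in>I. \<Sum>i\<in>I. a i * X j i))"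
      by (simp add: sum.distrib sum_distrib_left distrib_left mult.assoc)
    ultimately show ?thesis unfolding Q_def by simp
  qed
  have e2: "(\<Sum>j\<in>I. (a j / bb) * (2 * m * (\<Sum>i\<in>I. 2 * a i * H j i))) = 4 * m * P / bb"
    unfolding P_def by (simp add: sum_distrib_left sum_divide_distrib algebra_simps)
  have lw: "Lw = 2 * g + 2 * bb * L"
    unfolding Lw g_def L_def by (simp add: sum.distrib sum_distrib_left power2_eq_square algebra_simps)
  have e3: "(\<Sum>i\<in>I. \<Sum>j\<in>I. (2 * (a i * a j + bb * H i j))\<^sup>2) = 4 * g\<^sup>2 + 8 * bb * P + 4 * bb\<^sup>2 * Q"
  proof -
    have "(\<Sum>i\<in>I. \<Sum>j\<in>I. (2 * (a i * a j + bb * H i j))\<^sup>2)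
       = (\<Sum>i\<in>I. \<Sum>j\<in>I. 4 * ((a i)\<^sup>2 * (a j)\<^sup>2) + 8 * bb * (a i * a j * H i j) + 4 * bb\<^sup>2 * (H i j * H i j))"
      by (intro sum.cong refl) (simp add: power2_eq_square algebra_simps)
    also have "\<dots> = 4 * (\<Sum>i\<in>I. \<Sum>j\<in>I. (a i)\<^sup>2 * (a j)\<^sup>2) + 8 * bb * P + 4 * bb\<^sup>2 * Q"
      unfolding P_def Q_def by (simp add: sum.distrib sum_distrib_left)
    also have "(\<Sum>i\<in>I. \<Sum>j\<in>I. (a i)\<^sup>2 * (a j)\<^sup>2) = g\<^sup>2"
      unfolding g_def power2_eq_square[of "sum _ _"] by (simp add: sum_product)
    finally show ?thesis .
  qed
  have trH: "(\<Sum>i\<in>I. 2 * (a i * a i + bb * H i i)) = Lw" using Lw by simp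
  have e4: "(\<Sum>i\<in>I. \<Sum>j\<in>I. (2 * (a i * a j + bb * H i j) - (if i = j then Lw / m else 0))\<^sup>2)
      = 4 * g\<^sup>2 + 8 * bb * P + 4 * bb\<^sup>2 * Q - Lw\<^sup>2 / m"
  proof -
    have "(\<Sum>i\<in>I. \<Sum>j\<in>I. (2 * (a i * a j + bb * H i j) - (if i = j then Lw / m else 0))\<^sup>2)
      = (\<Sum>i\<in>I. \<Sum>j\<in>I. (2 * (a i * a j + bb * H i j))\<^sup>2) - 2 * (Lw / m) * (\<Sum>i\<in>I. 2 * (a i * a i + bb * H i i))
        + real (card I) * (Lw / m)\<^sup>2"
      by (rule tf_expand[OF fin])
    also have "\<dots> = 4 * g\<^sup>2 + 8 * bb * P + 4 * bb\<^sup>2 * Q - Lw\<^sup>2 / m"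
      unfolding e3 trH card using m0 by (simp add: power2_eq_square field_simps)
    finally show ?thesis .
  qed
  have e5: "(\<Sum>i\<in>I. (a i / bb) * Dps i) = k / bb * (g * L + bb * R + 2 * (k - 1) * P)"
  proof -
    have "(\<Sum>i\<in>I. (a i / bb) * Dps i)
       = k / bb * ((\<Sum>i\<in>I. (a i)\<^sup>2) * L + bb * (\<Sum>i\<in>I. a i * (\<Sum>j\<in>I. YY i j))
            + 2 * (k - 1) * (\<Sum>i\<in>I. \<Sum>j\<in>I. a i * a j * H i j))"
      unfolding Dps L_def
      by (simp add: sum.distrib sum_distrib_left sum_distrib_right sum_divide_distrib power2_eq_square algebra_simps)
    then show ?thesis unfolding g_def R_def P_def .
  qed
  have dd': "dd = 2 * m * g" unfolding dd g_def ..
  have ps': "ps = k * (bb * L + (k - 1) * g)" unfolding ps L_def g_def ..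
  have kk: "k \<noteq> 0" "bb \<noteq> 0" using k bb by auto
  show ?thesis
    unfolding e1 e2 e4 e5 unfolding dd' ps' lw
    using m0 kk
      apply (simp add: field_simps power2_eq_square)
      apply (simp add: k(1) algebra_simps)
      done
qed

abbreviation Dp :: "'v \<Rightarrow> ('v::real_normed_vector \<Rightarrow> real) \<Rightarrow> 'v \<Rightarrow> real" where
  "Dp e g q \<equiv> frechet_derivative g (at q) e"

lemma fd_sumsq:
  assumes "finite I" "\<And>i. i \<in> I \<Longrightarrow> f i differentiable at q"
  shows "Dp e (\<lambda>x. c * (\<Sum>i\<in>I. (f i x)\<^sup>2)) q = c * (\<Sum>i\<in>I. 2 * f i q * Dp e (f i) q)"
proof -
  have "((\<lambda>x. c * (\<Sum>i\<in>I. (f i x)\<^sup>2)) has_derivative (\<lambda>h. c * (\<Sum>i\<in>I. 2 * f i q * Dp h (f i) q))) (at q)"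
    using assms(2) fdw by (auto intro!: derivative_eq_intros simp: power2_eq_square mult.assoc)
  then show ?thesis by (subst fd_eq) auto
qed

lemma fd_sumprod:
  assumes "finite I" "\<And>i. i \<in> I \<Longrightarrow> f i differentiable at q" "\<And>i. i \<in> I \<Longrightarrow> g i differentiable at q"
  shows "Dp e (\<lambda>x. c * (\<Sum>i\<in>I. 2 * f i x * g i x)) q = c * (\<Sum>i\<in>I. 2 * (Dp e (f i) q * g i q + f i q * Dp e (g i) q))"
proof -
  have "((\<lambda>x. c * (\<Sum>i\<in>I. 2 * f i x * g i x)) has_derivative (\<lambda>h. c * (\<Sum>i\<in>I. 2 * (Dp h (f i) q * g i q + f i q * Dp h (g i) q)))) (at q)"
    using assms(2,3) fdw by (auto intro!: derivative_eq_intros simp: algebra_simps)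
  then show ?thesis by (subst fd_eq) auto
qed

lemma sm_D: "\<forall>k. Ck_on k g S \<Longrightarrow> e \<in> Basis \<Longrightarrow> \<forall>k. Ck_on k (\<lambda>q. Dp e g q) S"
  by (metis Ck_on.simps(2))

lemma sm_diff: "\<forall>k. Ck_on k g S \<Longrightarrow> open S \<Longrightarrow> q \<in> S \<Longrightarrow> g differentiable at q"
  using Ck_diff_at by blast

lemma sm_schwarz:
  fixes g :: "'v::euclidean_space \<Rightarrow> real"
  assumes "\<forall>k. Ck_on k g S" "open S" "q \<in> S" "i \<in> Basis" "j \<in> Basis"
  shows "Dp j (\<lambda>q. Dp i g q) q = Dp i (\<lambda>q. Dp j g q) q"
proof (rule schwarz[OF assms(2,3)])
  have gi: "\<forall>k. Ck_on k (\<lambda>q. Dp i g q) S" by (rule sm_D[OF assms(1,4)])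
  have gj: "\<forall>k. Ck_on k (\<lambda>q. Dp j g q) S" by (rule sm_D[OF assms(1,5)])
  show "g differentiable at x" if "x \<in> S" for x by (rule sm_diff[OF assms(1,2) that])
  show "(\<lambda>q. Dp i g q) differentiable at x" if "x \<in> S" for x by (rule sm_diff[OF gi assms(2) that])
  show "(\<lambda>q. Dp j g q) differentiable at x" if "x \<in> S" for x by (rule sm_diff[OF gj assms(2) that])
  show "continuous_on S (\<lambda>q. Dp j (\<lambda>q. Dp i g q) q)"
    using sm_D[OF gi assms(5)] Ck_cont by blast
  show "continuous_on S (\<lambda>q. Dp i (\<lambda>q. Dp j g q) q)"
    using sm_D[OF gj assms(4)] Ck_cont by blast
qed

lemma grad_inner_basis:
  assumes e: "e \<in> Basis" shows "grad g q \<bullet> e = Dp e g q"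
proof -
  have "grad g q \<bullet> e = (\<Sum>i\<in>Basis. Dp i g q * (i \<bullet> e))"
    unfolding grad_def inner_sum_left by simp
  also have "\<dots> = (\<Sum>i\<in>Basis. if i = e then Dp i g q else 0)"
    by (rule sum.cong[OF refl]) (use e in \<open>simp add: inner_Basis\<close>)
  also have "\<dots> = Dp e g q" using e by simp
  finally show ?thesis .
qed

lemma grad_inner: "grad g q \<bullet> grad h q = (\<Sum>i\<in>Basis. Dp i g q * Dp i h q)"
proof -
  have "grad g q \<bullet> grad h q = (\<Sum>i\<in>Basis. (grad g q \<bullet> i) * (grad h q \<bullet> i))"
    by (rule euclidean_inner)
  also have "\<dots> = (\<Sum>i\<in>Basis. Dp i g q * Dp i h q)"
    by (rule sum.cong[OF refl]) (simp add: grad_inner_basis)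
  finally show ?thesis .
qed

lemma norm_grad_sq: "(norm (grad g q))\<^sup>2 = (\<Sum>i\<in>Basis. (Dp i g q)\<^sup>2)"
  unfolding power2_norm_eq_inner grad_inner by (simp add: power2_eq_square)

lemma fd_ln:
  assumes "b q > 0" "b differentiable at q"
  shows "Dp e (\<lambda>x. ln (b x)) q = inverse (b q) * Dp e b q"
  by (rule fd_comp[OF DERIV_ln[OF assms(1)] assms(2)])

lemma fd_powr:
  assumes "b q > 0" "b differentiable at q"
  shows "Dp e (\<lambda>x. b x powr a) q = a * b q powr (a - 1) * Dp e b q"
  by (rule fd_comp[OF has_real_derivative_powr[OF assms(1)] assms(2)])

lemma hd_powr:
  fixes b :: "'v::real_normed_vector \<Rightarrow> real"
  assumes "b q > 0" "(b has_derivative b') (at q)"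
  shows "((\<lambda>x. b x powr a) has_derivative (\<lambda>h. b' h * (a * b q powr (a - 1)))) (at q)"
  by (rule DERIV_compose_FDERIV[OF has_real_derivative_powr[OF assms(1)] assms(2)])

lemma main_identity:
  fixes b vv :: "'v::euclidean_space \<Rightarrow> real"
  assumes S: "open S" "p \<in> S" and sm: "\<forall>k. Ck_on k b S" and pos: "\<And>q. q \<in> S \<Longrightarrow> b q > 0"
    and vv: "\<And>q. q \<in> S \<Longrightarrow> vv q = b q powr (2 - real DIM('v))" and m3: "DIM('v) \<ge> 3"
  shows "lap (\<lambda>q. 2 * real DIM('v) * (norm (grad b q))\<^sup>2) p
      + 2 * (2 - real DIM('v)) * (grad (\<lambda>q. ln (b q)) p \<bullet> grad (\<lambda>q. 2 * real DIM('v) * (norm (grad b q))\<^sup>2) p)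
    = real DIM('v) / (b p)\<^sup>2 * tf_hess_sq (\<lambda>q. (b q)\<^sup>2) p
      + 4 * real DIM('v) / (2 - real DIM('v)) * (grad (\<lambda>q. ln (b q)) p \<bullet> grad (\<lambda>q. b q ^ DIM('v) * lap vv q) p)
      + 2 * (2 * real DIM('v) * (norm (grad b p))\<^sup>2) * (b p ^ DIM('v) * lap vv p) / ((2 - real DIM('v)) * (b p)\<^sup>2)
      + 4 * (b p ^ DIM('v) * lap vv p)\<^sup>2 / ((2 - real DIM('v))\<^sup>2 * (b p)\<^sup>2)"
proof -
  let ?I = "Basis :: 'v set"
  define m where "m = real DIM('v)"
  define k where "k = 2 - m"
  have m0: "m \<noteq> 0" and k0: "k \<noteq> 0" using m3 unfolding m_def k_def by auto
  have b1: "\<forall>k. Ck_on k (\<lambda>q. Dp i b q) S" if "i \<in> ?I" for i using sm_D[OF sm that] .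
  have b2: "\<forall>k. Ck_on k (\<lambda>q. Dp j (\<lambda>q. Dp i b q) q) S" if "i \<in> ?I" "j \<in> ?I" for i j
    using sm_D[OF b1[OF that(1)] that(2)] .
  have b3: "\<forall>k. Ck_on k (\<lambda>q. Dp l (\<lambda>q. Dp j (\<lambda>q. Dp i b q) q) q) S" if "i \<in> ?I" "j \<in> ?I" "l \<in> ?I" for i j l
    using sm_D[OF b2[OF that(1,2)] that(3)] .
  have d0: "b differentiable at q" if "q \<in> S" for q using sm_diff[OF sm S(1) that] .
  have d1: "(\<lambda>q. Dp i b q) differentiable at q" if "q \<in> S" "i \<in> ?I" for q i
    using sm_diff[OF b1[OF that(2)] S(1) that(1)] .
  have d2: "(\<lambda>q. Dp j (\<lambda>q. Dp i b q) q) differentiable at q" if "q \<in> S" "i \<in> ?I" "j \<in> ?I" for q i j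
    using sm_diff[OF b2[OF that(2,3)] S(1) that(1)] .
  have d3: "(\<lambda>q. Dp l (\<lambda>q. Dp j (\<lambda>q. Dp i b q) q) q) differentiable at q"
    if "q \<in> S" "i \<in> ?I" "j \<in> ?I" "l \<in> ?I" for q i j l
    using sm_diff[OF b3[OF that(2,3,4)] S(1) that(1)] .
  define a where "a = (\<lambda>i. Dp i b p)"
  define H where "H = (\<lambda>i j. Dp i (\<lambda>q. Dp j b q) p)"
  define X where "X = (\<lambda>j i. Dp j (\<lambda>q. Dp j (\<lambda>q. Dp i b q) q) p)"
  define YY where "YY = (\<lambda>i j. Dp i (\<lambda>q. Dp j (\<lambda>q. Dp j b q) q) p)"
  define bb where "bb = b p"
  have bb: "bb > 0" unfolding bb_def using pos S by blast

  have d_eq: "(\<lambda>q. 2 * m * (norm (grad b q))\<^sup>2) = (\<lambda>q. 2 * m * (\<Sum>i\<in>?I. (Dp i b q)\<^sup>2))"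
    by (simp add: norm_grad_sq)
  have Dd: "Dp j (\<lambda>q. 2 * m * (\<Sum>i\<in>?I. (Dp i b q)\<^sup>2)) q = 2 * m * (\<Sum>i\<in>?I. 2 * Dp i b q * Dp j (\<lambda>q. Dp i b q) q)"
    if "q \<in> S" for q j
    by (rule fd_sumsq) (use d1 that in auto)
  have DDd: "Dp j (\<lambda>q. Dp j (\<lambda>q. 2 * m * (\<Sum>i\<in>?I. (Dp i b q)\<^sup>2)) q) p
      = 2 * m * (\<Sum>i\<in>?I. 2 * (H j i * H j i + a i * X j i))" if j: "j \<in> ?I" for j
  proof -
    have "Dp j (\<lambda>q. Dp j (\<lambda>q. 2 * m * (\<Sum>i\<in>?I. (Dp i b q)\<^sup>2)) q) p
        = Dp j (\<lambda>q. 2 * m * (\<Sum>i\<in>?I. 2 * Dp i b q * Dp j (\<lambda>q. Dp i b q) q)) p"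
      using fd_local[OF S, of "\<lambda>q. Dp j (\<lambda>q. 2 * m * (\<Sum>i\<in>?I. (Dp i b q)\<^sup>2)) q"] Dd by simp
    also have "\<dots> = 2 * m * (\<Sum>i\<in>?I. 2 * (Dp j (\<lambda>q. Dp i b q) p * Dp j (\<lambda>q. Dp i b q) p
                 + Dp i b p * Dp j (\<lambda>q. Dp j (\<lambda>q. Dp i b q) q) p))"
      by (rule fd_sumprod) (use d1 d2 S j in auto)
    finally show ?thesis unfolding H_def a_def X_def .
  qed
  have lapd: "lap (\<lambda>q. 2 * m * (norm (grad b q))\<^sup>2) p = (\<Sum>j\<in>?I. 2 * m * (\<Sum>i\<in>?I. 2 * (H j i * H j i + a i * X j i)))"
    unfolding d_eq lap_def hess_def by (rule sum.cong[OF refl]) (rule DDd)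
  have gln: "grad (\<lambda>q. ln (b q)) p \<bullet> grad G p = (\<Sum>j\<in>?I. (a j / bb) * Dp j G p)" for G
    unfolding grad_inner a_def bb_def
    by (rule sum.cong[OF refl]) (simp add: fd_ln[OF pos[OF S(2)] d0[OF S(2)]] divide_inverse mult_ac)
  have lngd: "grad (\<lambda>q. ln (b q)) p \<bullet> grad (\<lambda>q. 2 * m * (norm (grad b q))\<^sup>2) p
      = (\<Sum>j\<in>?I. (a j / bb) * (2 * m * (\<Sum>i\<in>?I. 2 * a i * H j i)))"
    unfolding gln d_eq by (rule sum.cong[OF refl]) (simp add: Dd[OF S(2)] a_def H_def)

  have vvk: "vv q = b q powr k" if "q \<in> S" for q using vv[OF that] unfolding k_def m_def .
  have Dvv: "Dp j vv q = k * b q powr (k - 1) * Dp j b q" if q: "q \<in> S" for q j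
  proof -
    have "Dp j vv q = Dp j (\<lambda>q. b q powr k) q"
      using fd_local[OF S(1) q, of vv "\<lambda>q. b q powr k"] vvk by simp
    also have "\<dots> = k * b q powr (k - 1) * Dp j b q"
      by (rule fd_powr[OF pos[OF q] d0[OF q]])
    finally show ?thesis .
  qed
  have DDvv: "Dp j (\<lambda>q. Dp j vv q) q
      = k * (k - 1) * b q powr (k - 2) * (Dp j b q)\<^sup>2 + k * b q powr (k - 1) * Dp j (\<lambda>q. Dp j b q) q"
    if q: "q \<in> S" and j: "j \<in> ?I" for q j
  proof -
    have "Dp j (\<lambda>q. Dp j vv q) q = Dp j (\<lambda>q. k * b q powr (k - 1) * Dp j b q) q"
      using fd_local[OF S(1) q, of "\<lambda>q. Dp j vv q" "\<lambda>q. k * b q powr (k - 1) * Dp j b q"] Dvv by simp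
    also have "\<dots> = k * b q powr (k - 1) * Dp j (\<lambda>q. Dp j b q) q + k * (Dp j b q * ((k - 1) * b q powr (k - 1 - 1))) * Dp j b q"
    proof -
      have hp: "((\<lambda>x. b x powr (k - 1)) has_derivative (\<lambda>h. Dp h b q * ((k - 1) * b q powr (k - 1 - 1)))) (at q)"
        by (rule hd_powr[OF pos[OF q] fdw[OF d0[OF q]]])
      have "((\<lambda>x. k * b x powr (k - 1) * Dp j b x) has_derivative
          (\<lambda>h. k * b q powr (k - 1) * Dp h (\<lambda>q. Dp j b q) q + k * (Dp h b q * ((k - 1) * b q powr (k - 1 - 1))) * Dp j b q)) (at q)"
        by (rule has_derivative_mult[OF has_derivative_mult_right[OF hp] fdw[OF d1[OF q j]]])
      from fd_eq[OF this] show ?thesis by simp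
    qed
    also have "\<dots> = k * (k - 1) * b q powr (k - 2) * (Dp j b q)\<^sup>2 + k * b q powr (k - 1) * Dp j (\<lambda>q. Dp j b q) q"
      by (simp add: power2_eq_square algebra_simps)
    finally show ?thesis .
  qed
  have psi_eq: "b q ^ DIM('v) * lap vv q
      = k * (b q * (\<Sum>j\<in>?I. Dp j (\<lambda>q. Dp j b q) q) + (k - 1) * (\<Sum>j\<in>?I. (Dp j b q)\<^sup>2))"
    if q: "q \<in> S" for q
  proof -
    have bq: "b q > 0" using pos[OF q] .
    have pm: "b q ^ DIM('v) = b q powr m" unfolding m_def using bq by (simp add: powr_realpow)
    have e1: "b q ^ DIM('v) * b q powr (k - 2) = 1"
      unfolding pm using bq by (simp add: powr_add[symmetric] k_def)
    have e2: "b q ^ DIM('v) * b q powr (k - 1) = b q"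
      unfolding pm using bq by (simp add: powr_add[symmetric] k_def)
    have "b q ^ DIM('v) * lap vv q = (\<Sum>j\<in>?I. b q ^ DIM('v) * Dp j (\<lambda>q. Dp j vv q) q)"
      unfolding lap_def hess_def by (simp add: sum_distrib_left)
    also have "\<dots> = (\<Sum>j\<in>?I. k * (k - 1) * (Dp j b q)\<^sup>2 + k * b q * Dp j (\<lambda>q. Dp j b q) q)"
    proof (rule sum.cong[OF refl])
      fix j :: 'v assume j: "j \<in> ?I"
      have "b q ^ DIM('v) * Dp j (\<lambda>q. Dp j vv q) q
         = k * (k - 1) * (b q ^ DIM('v) * b q powr (k - 2)) * (Dp j b q)\<^sup>2
           + k * (b q ^ DIM('v) * b q powr (k - 1)) * Dp j (\<lambda>q. Dp j b q) q"
        unfolding DDvv[OF q j] by (simp add: algebra_simps)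
      then show "b q ^ DIM('v) * Dp j (\<lambda>q. Dp j vv q) q = k * (k - 1) * (Dp j b q)\<^sup>2 + k * b q * Dp j (\<lambda>q. Dp j b q) q"
        unfolding e1 e2 by simp
    qed
    also have "\<dots> = (\<Sum>j\<in>?I. k * (b q * Dp j (\<lambda>q. Dp j b q) q) + k * ((k - 1) * (Dp j b q)\<^sup>2))"
      by (rule sum.cong[OF refl]) (simp add: algebra_simps)
    also have "\<dots> = k * (b q * (\<Sum>j\<in>?I. Dp j (\<lambda>q. Dp j b q) q) + (k - 1) * (\<Sum>j\<in>?I. (Dp j b q)\<^sup>2))"
      by (simp only: sum.distrib sum_distrib_left[symmetric] distrib_left)
    finally show ?thesis .
  qed
  have Dpsi: "Dp i (\<lambda>q. b q ^ DIM('v) * lap vv q) p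
      = k * (a i * (\<Sum>j\<in>?I. H j j) + bb * (\<Sum>j\<in>?I. YY i j) + (k - 1) * (\<Sum>j\<in>?I. 2 * a j * H i j))"
    if i: "i \<in> ?I" for i
  proof -
    have "Dp i (\<lambda>q. b q ^ DIM('v) * lap vv q) p
       = Dp i (\<lambda>q. k * (b q * (\<Sum>j\<in>?I. Dp j (\<lambda>q. Dp j b q) q) + (k - 1) * (\<Sum>j\<in>?I. (Dp j b q)\<^sup>2))) p"
      using fd_local[OF S, of "\<lambda>q. b q ^ DIM('v) * lap vv q"] psi_eq by simp
    also have "\<dots> = k * (Dp i b p * (\<Sum>j\<in>?I. Dp j (\<lambda>q. Dp j b q) p) + b p * (\<Sum>j\<in>?I. Dp i (\<lambda>q. Dp j (\<lambda>q. Dp j b q) q) p)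
          + (k - 1) * (\<Sum>j\<in>?I. 2 * Dp j b p * Dp i (\<lambda>q. Dp j b q) p))"
    proof -
      have "((\<lambda>q. k * (b q * (\<Sum>j\<in>?I. Dp j (\<lambda>q. Dp j b q) q) + (k - 1) * (\<Sum>j\<in>?I. (Dp j b q)\<^sup>2))) has_derivative
         (\<lambda>h. k * (Dp h b p * (\<Sum>j\<in>?I. Dp j (\<lambda>q. Dp j b q) p) + b p * (\<Sum>j\<in>?I. Dp h (\<lambda>q. Dp j (\<lambda>q. Dp j b q) q) p)
          + (k - 1) * (\<Sum>j\<in>?I. 2 * Dp j b p * Dp h (\<lambda>q. Dp j b q) p)))) (at p)"
        using fdw[OF d0[OF S(2)]] fdw[OF d1[OF S(2)]] fdw[OF d2[OF S(2)]]
        by (auto intro!: derivative_eq_intros simp: power2_eq_square algebra_simps sum_distrib_left sum.distrib)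
      from fd_eq[OF this] show ?thesis by simp
    qed
    finally show ?thesis unfolding a_def H_def YY_def bb_def .
  qed
  have psip: "bb ^ DIM('v) * lap vv p = k * (bb * (\<Sum>j\<in>?I. H j j) + (k - 1) * (\<Sum>j\<in>?I. (a j)\<^sup>2))"
    unfolding bb_def H_def a_def by (rule psi_eq[OF S(2)])
  have lnpsi: "grad (\<lambda>q. ln (b q)) p \<bullet> grad (\<lambda>q. b q ^ DIM('v) * lap vv q) p
     = (\<Sum>i\<in>?I. (a i / bb) * (k * (a i * (\<Sum>j\<in>?I. H j j) + bb * (\<Sum>j\<in>?I. YY i j) + (k - 1) * (\<Sum>j\<in>?I. 2 * a j * H i j))))"
    unfolding gln by (rule sum.cong[OF refl]) (simp add: Dpsi)

  have Dw: "Dp j (\<lambda>q. (b q)\<^sup>2) q = 2 * b q * Dp j b q" if q: "q \<in> S" for q j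
  proof -
    have "((\<lambda>q. (b q)\<^sup>2) has_derivative (\<lambda>h. 2 * b q * Dp h b q)) (at q)"
      using fdw[OF d0[OF q]] by (auto intro!: derivative_eq_intros simp: power2_eq_square)
    from fd_eq[OF this] show ?thesis by simp
  qed
  have hessw: "hess (\<lambda>q. (b q)\<^sup>2) p i j = 2 * (a i * a j + bb * H i j)" if i: "i \<in> ?I" and j: "j \<in> ?I" for i j
  proof -
    have "hess (\<lambda>q. (b q)\<^sup>2) p i j = Dp i (\<lambda>q. 2 * b q * Dp j b q) p"
      unfolding hess_def using fd_local[OF S, of "\<lambda>q. Dp j (\<lambda>q. (b q)\<^sup>2) q"] Dw by simp
    also have "\<dots> = 2 * (Dp i b p * Dp j b p + b p * Dp i (\<lambda>q. Dp j b q) p)"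
    proof -
      have "((\<lambda>q. 2 * b q * Dp j b q) has_derivative (\<lambda>h. 2 * (Dp h b p * Dp j b p + b p * Dp h (\<lambda>q. Dp j b q) p))) (at p)"
        using fdw[OF d0[OF S(2)]] fdw[OF d1[OF S(2) j]]
        by (auto intro!: derivative_eq_intros simp: algebra_simps)
      from fd_eq[OF this] show ?thesis by simp
    qed
    finally show ?thesis unfolding a_def bb_def H_def .
  qed
  define Lw where "Lw = (\<Sum>l\<in>?I. 2 * (a l * a l + bb * H l l))"
  have lapw: "lap (\<lambda>q. (b q)\<^sup>2) p = Lw"
    unfolding lap_def Lw_def by (rule sum.cong[OF refl]) (simp add: hessw)
  have tfw: "tf_hess_sq (\<lambda>q. (b q)\<^sup>2) p
      = (\<Sum>i\<in>?I. \<Sum>j\<in>?I. (2 * (a i * a j + bb * H i j) - (if i = j then Lw / m else 0))\<^sup>2)"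
    unfolding tf_hess_sq_def lapw m_def
    by (intro sum.cong refl) (simp add: hessw)

  have XY: "X j i = YY i j" if i: "i \<in> ?I" and j: "j \<in> ?I" for i j
  proof -
    have "X j i = Dp j (\<lambda>q. Dp i (\<lambda>q. Dp j b q) q) p"
      unfolding X_def
      using fd_local[OF S, of "\<lambda>q. Dp j (\<lambda>q. Dp i b q) q" "\<lambda>q. Dp i (\<lambda>q. Dp j b q) q"]
        sm_schwarz[OF sm S(1) _ i j] by simp
    also have "\<dots> = YY i j"
      unfolding YY_def by (rule sm_schwarz[OF b1[OF j] S i j])
    finally show ?thesis .
  qed

  have dp: "2 * m * (norm (grad b p))\<^sup>2 = 2 * m * (\<Sum>i\<in>?I. (a i)\<^sup>2)"
    unfolding norm_grad_sq a_def ..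
  have AC: "(\<Sum>j\<in>?I. 2 * m * (\<Sum>i\<in>?I. 2 * (H j i * H j i + a i * X j i)))
          + 2 * k * (\<Sum>j\<in>?I. (a j / bb) * (2 * m * (\<Sum>i\<in>?I. 2 * a i * H j i)))
       = m / bb\<^sup>2 * (\<Sum>i\<in>?I. \<Sum>j\<in>?I. (2 * (a i * a j + bb * H i j) - (if i = j then Lw / m else 0))\<^sup>2)
         + 4 * m / k * (\<Sum>i\<in>?I. (a i / bb) * (k * (a i * (\<Sum>j\<in>?I. H j j) + bb * (\<Sum>j\<in>?I. YY i j) + (k - 1) * (\<Sum>j\<in>?I. 2 * a j * H i j))))
         + 2 * (2 * m * (\<Sum>i\<in>?I. (a i)\<^sup>2)) * (k * (bb * (\<Sum>j\<in>?I. H j j) + (k - 1) * (\<Sum>j\<in>?I. (a j)\<^sup>2))) / (k * bb\<^sup>2)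
         + 4 * (k * (bb * (\<Sum>j\<in>?I. H j j) + (k - 1) * (\<Sum>j\<in>?I. (a j)\<^sup>2)))\<^sup>2 / (k\<^sup>2 * bb\<^sup>2)"
    by (rule algebra_core[where Dps="\<lambda>i. k * (a i * (\<Sum>j\<in>?I. H j j) + bb * (\<Sum>j\<in>?I. YY i j) + (k - 1) * (\<Sum>j\<in>?I. 2 * a j * H i j))"])
       (use m0 k0 bb XY in \<open>simp_all add: m_def k_def Lw_def\<close>)
  show ?thesis
    unfolding m_def[symmetric] k_def[symmetric] bb_def[symmetric] d_eq[symmetric]
    unfolding lapd lngd tfw lnpsi psip dp
    by (rule AC)
qed

theorem lemma2p3:
  fixes u f :: "'a::euclidean_space \<Rightarrow> real \<Rightarrow> real"
    and x :: 'a and y :: "'b::euclidean_space"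
  assumes N3: "DIM('b) \<ge> 3"
    and u_smooth: "smooth_on (\<lambda>(z, t). u z t) (UNIV \<times> {0<..})"
    and u_pos: "\<And>z t. t > 0 \<Longrightarrow> u z t > 0"
    and heat: "\<And>z t. t > 0 \<Longrightarrow> ((\<lambda>s. u z s) has_real_derivative lap (\<lambda>w. u w t) z) (at t)"
    and u_f: "\<And>z t. t > 0 \<Longrightarrow> u z t = t powr (- real DIM('a) / 2) * exp (- f z t)"
    and y0: "y \<noteq> 0"
  shows "lap (dfun f :: 'a \<times> 'b \<Rightarrow> real) (x, y)
           + 2 * (2 - real DIM('a \<times> 'b))
             * (grad (\<lambda>p. ln (bfun f p)) (x, y) \<bullet> grad (dfun f) (x, y))
         = real DIM('a \<times> 'b) / (bfun f (x, y))\<^sup>2 * Bsq f (x, y)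
           + 4 * real DIM('a \<times> 'b) / (2 - real DIM('a \<times> 'b))
             * (grad (\<lambda>p. ln (bfun f p)) (x, y) \<bullet> grad (psifun f) (x, y))
           + 2 * dfun f (x, y) * psifun f (x, y)
             / ((2 - real DIM('a \<times> 'b)) * (bfun f (x, y))\<^sup>2)
           + 4 * (psifun f (x, y))\<^sup>2
             / ((2 - real DIM('a \<times> 'b))\<^sup>2 * (bfun f (x, y))\<^sup>2)"
proof -
  let ?m = "real DIM('a \<times> 'b)"
  have k0: "2 - ?m \<noteq> 0" using N3 by simp
  have vpos: "vfun f q > 0" if "q \<in> Sset" for q :: "'a \<times> 'b"
    using that unfolding Sset_def vfun_def by (cases q) auto
  have vsm: "\<forall>k. Ck_on k (vfun f :: 'a \<times> 'b \<Rightarrow> real) Sset"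
    using v_smooth[OF u_smooth u_f] by blast
  have bsm: "\<forall>k. Ck_on k (bfun f :: 'a \<times> 'b \<Rightarrow> real) Sset"
  proof
    fix k
    show "Ck_on k (bfun f :: 'a \<times> 'b \<Rightarrow> real) Sset"
      unfolding bfun_def by (rule Ck_powr[where g="vfun f", OF _ open_Sset vpos]) (use vsm in auto)
  qed
  have bpos: "bfun f q > 0" if "q \<in> Sset" for q :: "'a \<times> 'b"
    using vpos[OF that] unfolding bfun_def by simp
  have vb: "vfun f q = bfun f q powr (2 - ?m)" if "q \<in> Sset" for q :: "'a \<times> 'b"
  proof -
    have "bfun f q powr (2 - ?m) = vfun f q powr (1 / (2 - ?m) * (2 - ?m))"
      unfolding bfun_def by (simp add: powr_powr)
    also have "\<dots> = vfun f q" using k0 vpos[OF that] by simp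
    finally show ?thesis by simp
  qed
  have p: "(x, y) \<in> (Sset :: ('a \<times> 'b) set)" using y0 unfolding Sset_def by simp
  have m3: "DIM('a \<times> 'b) \<ge> 3" using N3 by simp
  show ?thesis
    unfolding dfun_def psifun_def Bsq_def
    using main_identity[OF open_Sset p bsm bpos vb m3] by simp
qed

end
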